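(* If $\mathcal A$ is a vaguely bounded set of positive definite measures on $\mathbb R^d$, then $\widehat{\mathcal A}:=\{\widehat\mu:\mu\in\mathcal A\}$ is equi translation bounded.
   Context: Measures on $\mathbb R^d$ are complex Radon measures; $|\mu|$ is the total variation. With $\widetilde f(x)=\overline{f(-x)}$, a measure $\mu$ is positive definite if $\mu(f*\widetilde f)\ge0$ for all $f\in C_c(\mathbb R^d)$; such $\mu$ has a Fourier transform $\widehat\mu$, the (positive) measure with $\check f\in L^2(\widehat\mu)$ and $\mu(f*\widetilde f)=\widehat\mu(|\check f|^2)$ for all $f\in C_c$, $\check f(y)=\int f(x)e^{2\pi ixy}dx$. A set $\mathcal A$ of measures is vaguely bounded if $\{\mu(f):\mu\in\mathcal A\}$ is bounded for each $f\in C_c(\mathbb R^d)$; a family is equi translation bounded if $\sup\sup_{t}|\nu|(t+K)<\infty$ over the family for every compact $K$. *)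

theory Defs
  imports "HOL-Analysis.Analysis"
begin

text \<open>Continuous compactly supported complex functions on R^d (d arbitrary,
  modelled by a euclidean_space type).\<close>
definition Cc :: "('a::euclidean_space \<Rightarrow> complex) set" where
  "Cc = {f. continuous_on UNIV f \<and> compact (closure {x. f x \<noteq> 0})}"

text \<open>Complex Radon measures, viewed (Riesz/Bourbaki) as linear functionals on Cc
  that are continuous in the inductive limit topology.\<close>
definition complex_radon :: "(('a::euclidean_space \<Rightarrow> complex) \<Rightarrow> complex) \<Rightarrow> bool" where
  "complex_radon \<mu> \<longleftrightarrow>
     (\<forall>f\<in>Cc. \<forall>g\<in>Cc. \<mu> (\<lambda>x. f x + g x) = \<mu> f + \<mu> g) \<and>
     (\<forall>c. \<forall>f\<in>Cc. \<mu> (\<lambda>x. c * f x) = c * \<mu> f) \<and>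
     (\<forall>K. compact K \<longrightarrow> (\<exists>C. \<forall>f\<in>Cc. {x. f x \<noteq> 0} \<subseteq> K \<longrightarrow>
          cmod (\<mu> f) \<le> C * (SUP x. cmod (f x))))"

definition tilde :: "('a::euclidean_space \<Rightarrow> complex) \<Rightarrow> 'a \<Rightarrow> complex" where
  "tilde f x = cnj (f (- x))"

definition conv :: "('a::euclidean_space \<Rightarrow> complex) \<Rightarrow> ('a \<Rightarrow> complex) \<Rightarrow> 'a \<Rightarrow> complex" where
  "conv f g x = (LINT y|lborel. f y * g (x - y))"

definition icheck :: "('a::euclidean_space \<Rightarrow> complex) \<Rightarrow> 'a \<Rightarrow> complex" where
  "icheck f y = (LINT x|lborel. f x * cis (2 * pi * (x \<bullet> y)))"

definition positive_definite :: "(('a::euclidean_space \<Rightarrow> complex) \<Rightarrow> complex) \<Rightarrow> bool" where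
  "positive_definite \<mu> \<longleftrightarrow> complex_radon \<mu> \<and>
     (\<forall>f\<in>Cc. Im (\<mu> (conv f (tilde f))) = 0 \<and> 0 \<le> Re (\<mu> (conv f (tilde f))))"

definition is_fourier_transform ::
  "(('a::euclidean_space \<Rightarrow> complex) \<Rightarrow> complex) \<Rightarrow> 'a measure \<Rightarrow> bool" where
  "is_fourier_transform \<mu> \<nu> \<longleftrightarrow>
     sets \<nu> = sets borel \<and>
     (\<forall>K. compact K \<longrightarrow> emeasure \<nu> K < \<infinity>) \<and>
     (\<forall>f\<in>Cc. icheck f \<in> borel_measurable \<nu> \<and>
        integrable \<nu> (\<lambda>y. (cmod (icheck f y))\<^sup>2) \<and>
        \<mu> (conv f (tilde f)) = complex_of_real (LINT y|\<nu>. (cmod (icheck f y))\<^sup>2))"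

definition vaguely_bounded :: "((('a::euclidean_space \<Rightarrow> complex) \<Rightarrow> complex)) set \<Rightarrow> bool" where
  "vaguely_bounded A \<longleftrightarrow> (\<forall>f\<in>Cc. \<exists>C. \<forall>\<mu>\<in>A. cmod (\<mu> f) \<le> C)"

text \<open>Equi translation boundedness of a family of positive measures (|nu| = nu).\<close>
definition equi_translation_bounded :: "('a::euclidean_space measure) set \<Rightarrow> bool" where
  "equi_translation_bounded N \<longleftrightarrow>
     (\<forall>K. compact K \<longrightarrow> (\<exists>C::real. \<forall>\<nu>\<in>N. \<forall>t. emeasure \<nu> ((\<lambda>x. t + x) ` K) \<le> ennreal C))"

end

theory Submission
  imports Defs
begin

lemma Cc_intro:
  assumes "continuous_on UNIV f" "{x. f x \<noteq> 0} \<subseteq> L" "compact L"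
  shows "f \<in> Cc"
proof -
  have "closure {x. f x \<noteq> 0} \<subseteq> L"
    using assms by (simp add: closure_minimal compact_imp_closed)
  then have "closure {x. f x \<noteq> 0} \<inter> L = closure {x. f x \<noteq> 0}" by blast
  moreover have "compact (closure {x. f x \<noteq> 0} \<inter> L)"
    by (rule closed_Int_compact[OF closed_closure assms(3)])
  ultimately show ?thesis unfolding Cc_def using assms(1) by simp
qed

lemma Cc_cont: "f \<in> Cc \<Longrightarrow> continuous_on UNIV f"
  by (simp add: Cc_def)

lemma Cc_add: assumes "f \<in> Cc" "g \<in> Cc" shows "(\<lambda>x. f x + g x) \<in> Cc"
proof (rule Cc_intro)
  show "continuous_on UNIV (\<lambda>x. f x + g x)" using assms by (intro continuous_on_add continuous_on_mult continuous_on_const Cc_cont)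
  have "{x. f x + g x \<noteq> 0} \<subseteq> {x. f x \<noteq> 0} \<union> {x. g x \<noteq> 0}"
  proof
    fix x assume "x \<in> {x. f x + g x \<noteq> 0}"
    then show "x \<in> {x. f x \<noteq> 0} \<union> {x. g x \<noteq> 0}" by (cases "f x = 0") simp_all
  qed
  then show "{x. f x + g x \<noteq> 0} \<subseteq> closure {x. f x \<noteq> 0} \<union> closure {x. g x \<noteq> 0}"
    by (rule subset_trans[OF _ Un_mono[OF closure_subset closure_subset]])
  show "compact (closure {x. f x \<noteq> 0} \<union> closure {x. g x \<noteq> 0})"
    using assms by (simp add: Cc_def compact_Un)
qed

lemma Cc_mult: assumes "f \<in> Cc" shows "(\<lambda>x. c * f x) \<in> Cc"
proof (rule Cc_intro)
  show "continuous_on UNIV (\<lambda>x. c * f x)" using assms by (intro continuous_on_add continuous_on_mult continuous_on_const Cc_cont)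
  have "{x. c * f x \<noteq> 0} \<subseteq> {x. f x \<noteq> 0}" by auto
  then show "{x. c * f x \<noteq> 0} \<subseteq> closure {x. f x \<noteq> 0}"
    using closure_subset[of "{x. f x \<noteq> 0}"] by blast
  show "compact (closure {x. f x \<noteq> 0})"
    using assms by (simp add: Cc_def)
qed

lemma Cc_zero: "(\<lambda>x. 0) \<in> Cc"
  by (rule Cc_intro[where L="{}"]) auto

lemma radon_add: "complex_radon \<mu> \<Longrightarrow> f \<in> Cc \<Longrightarrow> g \<in> Cc \<Longrightarrow> \<mu> (\<lambda>x. f x + g x) = \<mu> f + \<mu> g"
  by (simp add: complex_radon_def)

lemma radon_mult: "complex_radon \<mu> \<Longrightarrow> f \<in> Cc \<Longrightarrow> \<mu> (\<lambda>x. c * f x) = c * \<mu> f"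
  by (simp add: complex_radon_def)

lemma radon_zero: assumes "complex_radon \<mu>" shows "\<mu> (\<lambda>x. 0) = 0"
  using radon_mult[OF assms Cc_zero, of 0] by simp

lemma radon_diff: assumes "complex_radon \<mu>" "f \<in> Cc" "g \<in> Cc"
  shows "\<mu> (\<lambda>x. f x - g x) = \<mu> f - \<mu> g"
proof -
  have "\<mu> (\<lambda>x. f x + (\<lambda>x. (-1) * g x) x) = \<mu> f + \<mu> (\<lambda>x. (-1) * g x)"
    using assms by (intro radon_add Cc_mult)
  moreover have "\<mu> (\<lambda>x. (-1) * g x) = - \<mu> g" using radon_mult[OF assms(1,3), of "-1"] by simp
  ultimately show ?thesis by simp
qed

lemma radon_sum: fixes N :: nat assumes "complex_radon \<mu>" "\<And>j. h j \<in> Cc"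
  shows "(\<lambda>x. \<Sum>j<N. c j * h j x) \<in> Cc \<and> \<mu> (\<lambda>x. \<Sum>j<N. c j * h j x) = (\<Sum>j<N. c j * \<mu> (h j))"
proof (induction N)
  case 0
  then show ?case using Cc_zero radon_zero[OF assms(1)] by simp
next
  case (Suc N)
  have e: "(\<lambda>x. \<Sum>j<Suc N. c j * h j x) = (\<lambda>x. (\<Sum>j<N. c j * h j x) + c N * h N x)" by simp
  have hc: "(\<lambda>x. c N * h N x) \<in> Cc" using assms(2) by (rule Cc_mult)
  show ?case unfolding e
    using Suc radon_add[OF assms(1) conjunct1[OF Suc] hc] Cc_add[OF conjunct1[OF Suc] hc]
      radon_mult[OF assms(1) assms(2)] by simp
qed

lemma hump:
  fixes g :: "nat \<Rightarrow> 'a::euclidean_space \<Rightarrow> complex" and ms :: "nat \<Rightarrow> ('a \<Rightarrow> complex) \<Rightarrow> complex"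
  assumes rad: "\<And>i. complex_radon (ms i)"
    and vb: "\<forall>h\<in>Cc. \<exists>C. \<forall>i. cmod (ms i h) \<le> C"
    and gC: "\<And>j. g j \<in> Cc" and gM: "\<And>j x. cmod (g j x) \<le> M"
    and gL: "\<And>j. {x. g j x \<noteq> 0} \<subseteq> L" and L: "compact L"
    and pos: "\<And>i j. Im (ms i (g j)) = 0 \<and> 0 \<le> Re (ms i (g j))"
  shows "\<exists>B. \<forall>i. (1/2)^i * Re (ms i (g i)) \<le> B"
proof -
  define S where "S N x = (\<Sum>j<N. (1/2::complex)^j * g j x)" for N x
  define G where "G x = suminf (\<lambda>j. (1/2::complex)^j * g j x)" for x
  have ul: "uniform_limit UNIV S G sequentially"
    unfolding S_def[abs_def] G_def[abs_def]
  proof (rule Weierstrass_m_test[where f="\<lambda>j x. (1/2::complex)^j * g j x" and M="\<lambda>n. (1/2)^n * M"])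
    show "norm ((1/2::complex)^n * g n x) \<le> (1/2)^n * M" for n x
    proof -
      have "norm ((1/2::complex)^n * g n x) = (1/2)^n * cmod (g n x)" by (simp add: norm_mult norm_power)
      also have "\<dots> \<le> (1/2)^n * M" by (rule mult_left_mono[OF gM]) simp
      finally show ?thesis .
    qed
    show "summable (\<lambda>n. (1/2::real)^n * M)"
      by (intro summable_mult2 summable_geometric) simp
  qed
  have SC: "S N \<in> Cc" for N
    unfolding S_def[abs_def] using radon_sum[OF rad[of 0] gC, where N=N and c="\<lambda>j. (1/2)^j"] by (rule conjunct1)
  have Sm: "ms i (S N) = (\<Sum>j<N. (1/2)^j * ms i (g j))" for N i
    unfolding S_def[abs_def] using radon_sum[OF rad[of i] gC, where N=N and c="\<lambda>j. (1/2)^j"] by (rule conjunct2)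
  have SL: "S N x = 0" if "x \<notin> L" for N x
  proof -
    have "\<And>j. g j x = 0" using gL that by blast
    then show ?thesis unfolding S_def by simp
  qed
  have GL: "G x = 0" if "x \<notin> L" for x
  proof -
    have "\<And>j. g j x = 0" using gL that by blast
    then show ?thesis unfolding G_def by simp
  qed
  have Gcont: "continuous_on UNIV G"
    by (rule uniform_limit_theorem[OF always_eventually ul]) (use Cc_cont[OF SC] in blast, simp)
  have GC: "G \<in> Cc" by (rule Cc_intro[OF Gcont _ L]) (use GL in blast)
  have "\<exists>C. \<forall>i. cmod (ms i G) \<le> C" using vb GC by (rule bspec)
  then obtain CG where CG: "\<And>i. cmod (ms i G) \<le> CG" by blast
  show ?thesis
  proof (intro exI allI)
    fix i
    obtain C where C: "\<And>f. f \<in> Cc \<Longrightarrow> {x. f x \<noteq> 0} \<subseteq> L \<Longrightarrow> cmod (ms i f) \<le> C * (SUP x. cmod (f x))"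
    proof -
      have "\<forall>K. compact K \<longrightarrow> (\<exists>C. \<forall>f\<in>Cc. {x. f x \<noteq> 0} \<subseteq> K \<longrightarrow>
          cmod (ms i f) \<le> C * (SUP x. cmod (f x)))"
        using rad[of i] unfolding complex_radon_def by (elim conjE)
      then have "\<exists>C. \<forall>f\<in>Cc. {x. f x \<noteq> 0} \<subseteq> L \<longrightarrow>
          cmod (ms i f) \<le> C * (SUP x. cmod (f x))" using L by simp
      then show ?thesis using that by auto
    qed
    define C' where "C' = max C 0 + 1"
    have C'pos: "C' > 0" unfolding C'_def by simp
    have key: "(1/2)^i * Re (ms i (g i)) \<le> Re (ms i G) + e" if e: "e > 0" for e
    proof -
      have "eventually (\<lambda>N. \<forall>x\<in>UNIV. dist (S N x) (G x) < e / C') sequentially"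
        using uniform_limitD[OF ul] e C'pos by simp
      moreover have "eventually (\<lambda>N. N \<ge> Suc i) sequentially" by (rule eventually_ge_at_top)
      ultimately have "eventually (\<lambda>N. (\<forall>x. dist (S N x) (G x) < e / C') \<and> N \<ge> Suc i) sequentially"
        by eventually_elim auto
      then obtain N where N: "\<And>x. dist (S N x) (G x) < e / C'" "N \<ge> Suc i"
        unfolding eventually_sequentially by blast
      define h where "h x = G x - S N x" for x
      have hC: "h \<in> Cc" unfolding h_def
        using Cc_add[OF GC Cc_mult[OF SC[where N=N], where c="-1"]] by (simp add: algebra_simps)
      have hL: "{x. h x \<noteq> 0} \<subseteq> L"
      proof
        fix x assume "x \<in> {x. h x \<noteq> 0}"
        then show "x \<in> L" unfolding h_def using GL[of x] SL[of x N] by (cases "x \<in> L") auto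
      qed
      have hb: "cmod (h x) \<le> e / C'" for x
        using N(1)[of x] unfolding h_def by (simp add: dist_norm norm_minus_commute)
      have bdd: "bdd_above (range (\<lambda>x. cmod (h x)))" by (intro bdd_aboveI[where M="e/C'"]) (use hb in auto)
      have sup_le: "(SUP x. cmod (h x)) \<le> e / C'" by (rule cSUP_least) (use hb in auto)
      have sup_ge: "0 \<le> (SUP x. cmod (h x))"
        by (rule order_trans[OF norm_ge_zero[of "h 0"]]) (rule cSUP_upper[OF _ bdd], simp)
      have "cmod (ms i h) \<le> C * (SUP x. cmod (h x))" using C[OF hC hL] .
      also have "\<dots> \<le> C' * (SUP x. cmod (h x))"
        using sup_ge unfolding C'_def by (intro mult_right_mono) auto
      also have "\<dots> \<le> C' * (e / C')" using sup_le C'pos by (intro mult_left_mono) auto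
      also have "\<dots> = e" using C'pos by simp
      finally have hsmall: "cmod (ms i h) \<le> e" .
      have "ms i h = ms i G - ms i (S N)" unfolding h_def by (rule radon_diff[OF rad GC SC])
      then have "Re (ms i (S N)) \<le> Re (ms i G) + e"
        using hsmall abs_Re_le_cmod[of "ms i h"] by simp
      moreover have "(1/2)^i * Re (ms i (g i)) \<le> Re (ms i (S N))"
      proof -
        have "Re (ms i (S N)) = (\<Sum>j<N. (1/2)^j * Re (ms i (g j)))"
          unfolding Sm by (simp add: Re_sum)
        moreover have "(1/2)^i * Re (ms i (g i)) \<le> (\<Sum>j<N. (1/2::real)^j * Re (ms i (g j)))"
          by (rule member_le_sum[where f="\<lambda>j. (1/2::real)^j * Re (ms i (g j))"])
             (use N(2) pos in auto)
        ultimately show ?thesis by simp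
      qed
      ultimately show ?thesis by simp
    qed
    have "(1/2)^i * Re (ms i (g i)) \<le> Re (ms i G)"
      by (rule field_le_epsilon) (use key in auto)
    also have "\<dots> \<le> CG" using CG[of i] complex_Re_le_cmod[of "ms i G"] by simp
    finally show "(1/2)^i * Re (ms i (g i)) \<le> CG" .
  qed
qed

lemma integrable_cs:
  fixes \<phi> :: "'a::euclidean_space \<Rightarrow> 'b::{banach, second_countable_topology}"
  assumes "continuous_on UNIV \<phi>" "\<And>x. norm x > r \<Longrightarrow> \<phi> x = 0"
  shows "integrable lborel \<phi>"
proof -
  have "integrable lborel (\<lambda>x. indicator (cball 0 r) x *\<^sub>R \<phi> x)"
    by (rule borel_integrable_compact) (auto intro: continuous_on_subset[OF assms(1)])
  moreover have "(\<lambda>x. indicator (cball 0 r) x *\<^sub>R \<phi> x) = \<phi>"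
    using assms(2) by (auto simp: indicator_def fun_eq_iff not_le)
  ultimately show ?thesis by simp
qed

definition fr :: "real \<Rightarrow> 'a::euclidean_space \<Rightarrow> real" where
  "fr d x = max 0 (d - norm x)"

lemma fr_cont: "continuous_on UNIV (fr d)"
  unfolding fr_def by (intro continuous_intros)

lemma fr_nonneg: "0 \<le> fr d x" by (simp add: fr_def)
lemma fr_le: "0 \<le> d \<Longrightarrow> fr d x \<le> d" by (simp add: fr_def)
lemma fr_nz: "fr d x \<noteq> 0 \<Longrightarrow> norm x < d" by (auto simp: fr_def)
lemma fr_zero: "norm x \<ge> d \<Longrightarrow> fr d x = 0" by (auto simp: fr_def)
lemma fr_lip: "\<bar>fr d x - fr d y\<bar> \<le> norm (x - y)"
  unfolding fr_def using norm_triangle_ineq3[of x y] by (auto simp: max_def)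

lemma fr_int: "integrable lborel (fr d :: 'a::euclidean_space \<Rightarrow> real)"
  by (rule integrable_cs[OF fr_cont, where r=d]) (simp add: fr_zero)

lemma fr_int_mult:
  fixes h :: "'a::euclidean_space \<Rightarrow> real"
  assumes "continuous_on UNIV h"
  shows "integrable lborel (\<lambda>x. fr d x * h x)"
  by (rule integrable_cs[where r=d]) (auto intro!: continuous_intros fr_cont assms simp: fr_zero)

lemma fr_int_pos:
  assumes "d > 0"
  shows "0 < (LINT x|lborel. fr d (x::'a::euclidean_space))"
proof -
  have fin: "emeasure lborel (ball (0::'a) (d/2)) < \<infinity>" by (rule emeasure_lborel_ball_finite)
  have "0 < d/2 * measure lborel (ball (0::'a) (d/2))" using assms content_ball_pos[of "d/2" 0] by simp
  also have "d/2 * measure lborel (ball (0::'a) (d/2)) = (LINT x|lborel. d/2 * indicator (ball (0::'a) (d/2)) x)"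
    by simp
  also have "\<dots> \<le> (LINT x|lborel. fr d (x::'a))"
  proof (rule Bochner_Integration.integral_mono)
    show "integrable lborel (\<lambda>x. d/2 * indicator (ball (0::'a) (d/2)) x :: real)"
      using fin by (intro integrable_mult_right integrable_real_indicator) auto
    show "integrable lborel (fr d :: 'a \<Rightarrow> real)" by (rule fr_int)
    show "d/2 * indicator (ball (0::'a) (d/2)) x \<le> fr d x" for x
      using assms by (auto simp: indicator_def fr_def max_def)
  qed
  finally show ?thesis .
qed

definition ft :: "real \<Rightarrow> 'a::euclidean_space \<Rightarrow> 'a \<Rightarrow> complex" where
  "ft d t x = complex_of_real (fr d x) * cis (- (2 * pi * (x \<bullet> t)))"

lemma ft_cont: "continuous_on UNIV (ft d t)"
  unfolding ft_def by (intro continuous_intros fr_cont continuous_on_of_real) 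

lemma ft_Cc: "ft d t \<in> Cc"
  by (rule Cc_intro[OF ft_cont, where L="cball 0 d"]) (auto simp: ft_def dest: fr_nz)

lemma icheck_ft: "icheck (ft d t) y = icheck (ft d 0) (y - t)"
proof -
  have "ft d t x * cis (2 * pi * (x \<bullet> y)) = ft d 0 x * cis (2 * pi * (x \<bullet> (y - t)))" for x
    by (simp add: ft_def cis_mult inner_diff_right algebra_simps)
  then show ?thesis unfolding icheck_def by simp
qed

lemma cos_half: "\<bar>\<theta>::real\<bar> \<le> 1 \<Longrightarrow> 1/2 \<le> cos \<theta>"
proof -
  assume h: "\<bar>\<theta>\<bar> \<le> 1"
  have "1 \<le> pi / 3" using pi_gt3 by simp
  then have "cos (pi/3) \<le> cos \<bar>\<theta>\<bar>"
    using h cos_mono_le_eq[of "pi/3" "\<bar>\<theta>\<bar>"] pi_gt3 by simp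
  then show ?thesis by (simp add: cos_60)
qed

lemma Re_icheck:
  fixes y :: "'a::euclidean_space"
  assumes d: "d > 0" and y: "norm y \<le> R" and dR: "2 * pi * d * R \<le> 1"
  shows "(LINT x|lborel. fr d (x::'a)) / 2 \<le> Re (icheck (ft d 0) y)"
proof -
  have ig: "integrable lborel (\<lambda>x. ft d 0 x * cis (2 * pi * (x \<bullet> y)))"
    by (rule integrable_cs[where r=d]) (intro continuous_intros ft_cont, simp add: ft_def fr_zero)
  have "Re (icheck (ft d 0) y) = (LINT x|lborel. Re (ft d 0 x * cis (2 * pi * (x \<bullet> y))))"
    unfolding icheck_def by (rule integral_Re[OF ig, symmetric])
  also have "\<dots> = (LINT x|lborel. fr d (x::'a) * cos (2 * pi * (x \<bullet> y)))"
    by (simp add: ft_def)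
  also have "\<dots> \<ge> (LINT x|lborel. (fr d (x::'a) / 2))"
  proof (rule Bochner_Integration.integral_mono)
    show "integrable lborel (\<lambda>x. fr d (x::'a) / 2)" by (rule integrable_divide_zero) (rule fr_int)
    show "integrable lborel (\<lambda>x. fr d (x::'a) * cos (2 * pi * (x \<bullet> y)))"
      by (rule fr_int_mult) (intro continuous_intros)
    fix x :: 'a
    show "fr d x / 2 \<le> fr d x * cos (2 * pi * (x \<bullet> y))"
    proof (cases "fr d x = 0")
      case False
      then have nx: "norm x < d" by (rule fr_nz)
      have "\<bar>x \<bullet> y\<bar> \<le> norm x * norm y" by (rule Cauchy_Schwarz_ineq2)
      also have "\<dots> \<le> d * R" using nx y d by (intro mult_mono) auto
      finally have "\<bar>2 * pi * (x \<bullet> y)\<bar> \<le> 2 * pi * (d * R)"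
        by (simp add: abs_mult)
      then have "1/2 \<le> cos (2 * pi * (x \<bullet> y))" using dR by (intro cos_half) simp
      then have "fr d x * (1/2) \<le> fr d x * cos (2 * pi * (x \<bullet> y))"
        by (rule mult_left_mono[OF _ fr_nonneg])
      then show ?thesis by simp
    qed simp
  qed
  finally show ?thesis by simp
qed

definition kf :: "real \<Rightarrow> 'a::euclidean_space \<Rightarrow> real" where
  "kf d x = (LINT y|lborel. fr d y * fr d (y - x))"

lemma kf_int: "integrable lborel (\<lambda>y. fr d y * fr d (y - x :: 'a::euclidean_space))"
  by (rule fr_int_mult) (intro continuous_intros continuous_on_compose2[OF fr_cont], auto)

lemma conv_ft:
  "conv (ft d t) (tilde (ft d t)) x = cis (- (2 * pi * (x \<bullet> t))) * complex_of_real (kf d x)"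
proof -
  have eq: "ft d t y * tilde (ft d t) (x - y) = cis (- (2 * pi * (x \<bullet> t))) * complex_of_real (fr d y * fr d (y - x))" for y
  proof -
    have e: "- (x - y) = y - x" by simp
    have "ft d t y * tilde (ft d t) (x - y) =
      complex_of_real (fr d y * fr d (y - x)) * (cis (- (2 * pi * (y \<bullet> t))) * cis (2 * pi * ((y - x) \<bullet> t)))"
      unfolding tilde_def ft_def e by (simp add: cis_cnj)
    also have "cis (- (2 * pi * (y \<bullet> t))) * cis (2 * pi * ((y - x) \<bullet> t)) = cis (- (2 * pi * (x \<bullet> t)))"
      by (simp add: cis_mult inner_diff_left algebra_simps)
    finally show ?thesis by simp
  qed
  have "conv (ft d t) (tilde (ft d t)) x = (LINT y|lborel. cis (- (2 * pi * (x \<bullet> t))) * complex_of_real (fr d y * fr d (y - x)))"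
    unfolding conv_def by (rule Bochner_Integration.integral_cong[OF refl eq])
  also have "\<dots> = cis (- (2 * pi * (x \<bullet> t))) * complex_of_real (kf d x)"
    unfolding kf_def by (simp only: integral_mult_right_zero integral_complex_of_real)
  finally show ?thesis .
qed

lemma kf_nz: assumes "kf d x \<noteq> 0" shows "norm x < 2 * d"
proof (rule ccontr)
  assume "\<not> norm x < 2 * d"
  then have h: "fr d y * fr d (y - x) = 0" for y
  proof -
    have "fr d y = 0 \<or> fr d (y - x) = 0"
    proof (cases "fr d y = 0")
      case False
      then have "norm y < d" by (rule fr_nz)
      moreover have "norm x \<le> norm y + norm (y - x)" using norm_triangle_ineq4[of y "y - x"] 
        by (metis add_diff_cancel_left' diff_diff_eq2 norm_minus_commute norm_triangle_ineq4)
      ultimately have "norm (y - x) \<ge> d" using \<open>\<not> norm x < 2 * d\<close> by linarith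
      then show ?thesis by (simp add: fr_zero)
    qed simp
    then show ?thesis by auto
  qed
  have "kf d x = 0" unfolding kf_def h by simp
  with assms show False by simp
qed

lemma kf_bound: fixes x :: "'a::euclidean_space" assumes "d > 0" shows "\<bar>kf d x\<bar> \<le> d * (LINT y|lborel. fr d (y::'a))"
proof -
  have "\<bar>kf d x\<bar> \<le> (LINT y|lborel. d * fr d (y::'a))"
    unfolding kf_def
  proof (rule integral_abs_bound_integral[OF kf_int])
    show "integrable lborel (\<lambda>y. d * fr d (y::'a))" by (intro integrable_mult_right fr_int)
    show "\<bar>fr d y * fr d (y - x)\<bar> \<le> d * fr d y" for y
      using fr_nonneg[of d y] fr_nonneg[of d "y - x"] fr_le[of d "y - x"] assms
      by (simp add: abs_mult mult.commute[of d] mult_left_mono)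
  qed
  then show ?thesis by simp
qed

lemma kf_lip: fixes x x' :: "'a::euclidean_space" shows "\<bar>kf d x - kf d x'\<bar> \<le> (LINT y|lborel. fr d (y::'a)) * norm (x - x')"
proof -
  have "kf d x - kf d x' = (LINT y|lborel. fr d y * fr d (y - x) - fr d y * fr d (y - x'))"
    unfolding kf_def by (rule Bochner_Integration.integral_diff[OF kf_int kf_int, symmetric])
  also have "\<bar>\<dots>\<bar> \<le> (LINT y|lborel. fr d (y::'a) * norm (x - x'))"
  proof (rule integral_abs_bound_integral)
    show "integrable lborel (\<lambda>y. fr d y * fr d (y - x) - fr d y * fr d (y - x'))"
      by (intro Bochner_Integration.integrable_diff kf_int)
    show "integrable lborel (\<lambda>y. fr d (y::'a) * norm (x - x'))" by (intro integrable_mult_left fr_int)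
    fix y :: 'a
    have "\<bar>fr d (y - x) - fr d (y - x')\<bar> \<le> norm ((y - x) - (y - x'))" by (rule fr_lip)
    also have "norm ((y - x) - (y - x')) = norm (x - x')" by (simp add: norm_minus_commute)
    finally have "fr d y * \<bar>fr d (y - x) - fr d (y - x')\<bar> \<le> fr d y * norm (x - x')"
      by (rule mult_left_mono[OF _ fr_nonneg])
    then show "\<bar>fr d y * fr d (y - x) - fr d y * fr d (y - x')\<bar> \<le> fr d y * norm (x - x')"
      using fr_nonneg[of d y] by (simp add: abs_mult right_diff_distrib[symmetric])
  qed
  also have "\<dots> = (LINT y|lborel. fr d (y::'a)) * norm (x - x')" by simp
  finally show ?thesis .
qed

lemma kf_cont: "continuous_on UNIV (kf d :: 'a::euclidean_space \<Rightarrow> real)"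
proof (rule lipschitz_on_continuous_on[OF lipschitz_onI])
  show "dist (kf d x) (kf d x') \<le> (LINT y|lborel. fr d (y::'a)) * dist x x'" for x x' :: 'a
    using kf_lip[of d x x'] by (simp add: dist_real_def dist_norm)
  show "0 \<le> (LINT y|lborel. fr d (y::'a))" by (rule Bochner_Integration.integral_nonneg) (simp add: fr_nonneg)
qed

definition gt :: "real \<Rightarrow> 'a::euclidean_space \<Rightarrow> 'a \<Rightarrow> complex" where
  "gt d t = conv (ft d t) (tilde (ft d t))"

lemma gt_eq: "gt d t x = cis (- (2 * pi * (x \<bullet> t))) * complex_of_real (kf d x)"
  unfolding gt_def by (rule conv_ft)

lemma gt_L: "{x. gt d t x \<noteq> 0} \<subseteq> cball 0 (2 * d)"
  using kf_nz by (force simp: gt_eq)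

lemma gt_Cc: "gt d t \<in> Cc"
proof (rule Cc_intro[OF _ gt_L compact_cball])
  have "gt d t = (\<lambda>x. cis (- (2 * pi * (x \<bullet> t))) * complex_of_real (kf d x))" by (rule ext, rule gt_eq)
  moreover have "continuous_on UNIV (\<lambda>x. cis (- (2 * pi * (x \<bullet> t))) * complex_of_real (kf d x))"
    by (intro continuous_intros continuous_on_of_real kf_cont)
  ultimately show "continuous_on UNIV (gt d t)" by simp
qed

lemma gt_bound: fixes x :: "'a::euclidean_space" shows "d > 0 \<Longrightarrow> cmod (gt d t x) \<le> d * (LINT y|lborel. fr d (y::'a))"
  using kf_bound[of d x] by (simp add: gt_eq norm_mult)

theorem corollary8p4:
  fixes A :: "(('a::euclidean_space \<Rightarrow> complex) \<Rightarrow> complex) set"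
  assumes "\<forall>\<mu>\<in>A. positive_definite \<mu>"
    and "vaguely_bounded A"
  shows "equi_translation_bounded {\<nu>. \<exists>\<mu>\<in>A. is_fourier_transform \<mu> \<nu>}"
proof -
  have rad: "complex_radon \<mu>" if "\<mu> \<in> A" for \<mu>
    using assms(1) that unfolding positive_definite_def by blast
  have pd: "Im (\<mu> (conv f (tilde f))) = 0 \<and> 0 \<le> Re (\<mu> (conv f (tilde f)))" if "\<mu> \<in> A" "f \<in> Cc" for \<mu> f
    using assms(1) that unfolding positive_definite_def by blast
  have vb: "\<exists>C. \<forall>\<mu>\<in>A. cmod (\<mu> f) \<le> C" if "f \<in> Cc" for f
    using assms(2) that unfolding vaguely_bounded_def by blast
  show ?thesis unfolding equi_translation_bounded_def
  proof (intro allI impI)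
    fix K :: "'a set" assume K: "compact K"
    obtain R where R: "R > 0" "\<And>y. y \<in> K \<Longrightarrow> norm y \<le> R"
      using compact_imp_bounded[OF K] unfolding bounded_pos by blast
    define d where "d = 1 / (8 * (R + 1))"
    have d: "d > 0" unfolding d_def using R by simp
    have dR: "2 * pi * d * R \<le> 1"
    proof -
      have "2 * pi * d * R = (2 * pi / 8) * (R / (R + 1))" unfolding d_def using R by (simp add: field_simps)
      also have "\<dots> \<le> 1 * 1"
        using pi_less_4 R by (intro mult_mono) (auto simp: field_simps)
      finally show ?thesis by simp
    qed
    define I where "I = (LINT x|lborel. fr d (x::'a))"
    have I: "I > 0" unfolding I_def by (rule fr_int_pos[OF d])
    define c where "c = I / 2"
    have c: "c > 0" unfolding c_def using I by simp
    have gpos: "Im (\<mu> (gt d t)) = 0 \<and> 0 \<le> Re (\<mu> (gt d t))" if "\<mu> \<in> A" for \<mu> t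
      unfolding gt_def by (rule pd[OF that ft_Cc])
    have "\<exists>B. \<forall>\<mu>\<in>A. \<forall>t. Re (\<mu> (gt d t)) \<le> B"
    proof (rule ccontr)
      assume "\<not> ?thesis"
      then have "\<forall>j::nat. \<exists>\<mu> t. \<mu> \<in> A \<and> Re (\<mu> (gt d t)) > 2^j * real j"
        by (meson not_le)
      then obtain ms ts where mt: "\<And>j. ms j \<in> A" "\<And>j. Re (ms j (gt d (ts j))) > 2^j * real j"
        by metis
      have "\<exists>B. \<forall>i. (1/2)^i * Re (ms i (gt d (ts i))) \<le> B"
      proof (rule hump[where g="\<lambda>j. gt d (ts j)" and M="d * I" and L="cball 0 (2 * d)"])
        show "complex_radon (ms i)" for i by (rule rad[OF mt(1)])
        show "\<forall>h\<in>Cc. \<exists>C. \<forall>i. cmod (ms i h) \<le> C"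
        proof
          fix h :: "'a \<Rightarrow> complex" assume "h \<in> Cc"
          then obtain C where "\<forall>\<mu>\<in>A. cmod (\<mu> h) \<le> C" using vb by blast
          then show "\<exists>C. \<forall>i. cmod (ms i h) \<le> C" using mt(1) by blast
        qed
        show "gt d (ts j) \<in> Cc" for j by (rule gt_Cc)
        show "cmod (gt d (ts j) x) \<le> d * I" for j x unfolding I_def by (rule gt_bound[OF d])
        show "{x. gt d (ts j) x \<noteq> 0} \<subseteq> cball 0 (2 * d)" for j by (rule gt_L)
        show "compact (cball (0::'a) (2 * d))" by (rule compact_cball)
        show "Im (ms i (gt d (ts j))) = 0 \<and> 0 \<le> Re (ms i (gt d (ts j)))" for i j
          by (rule gpos[OF mt(1)])
      qed
      then obtain B where B: "\<And>i. (1/2)^i * Re (ms i (gt d (ts i))) \<le> B" by blast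
      obtain j :: nat where j: "B < real j" using reals_Archimedean2 by blast
      have "real j = (1/2)^j * (2^j * real j)" by (simp add: power_divide)
      also have "\<dots> < (1/2)^j * Re (ms j (gt d (ts j)))"
        by (rule mult_strict_left_mono[OF mt(2)]) simp
      also have "\<dots> \<le> B" by (rule B)
      finally show False using j by simp
    qed
    then obtain B where B: "\<And>\<mu> t. \<mu> \<in> A \<Longrightarrow> Re (\<mu> (gt d t)) \<le> B" by blast
    show "\<exists>C. \<forall>\<nu>\<in>{\<nu>. \<exists>\<mu>\<in>A. is_fourier_transform \<mu> \<nu>}. \<forall>t. emeasure \<nu> ((\<lambda>x. t + x) ` K) \<le> ennreal C"
    proof (intro exI ballI allI)
      fix \<nu> t assume "\<nu> \<in> {\<nu>. \<exists>\<mu>\<in>A. is_fourier_transform \<mu> \<nu>}"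
      then obtain \<mu> where \<mu>: "\<mu> \<in> A" "is_fourier_transform \<mu> \<nu>" by blast
      define S where "S = (\<lambda>x. t + x) ` K"
      have Sc: "compact S" unfolding S_def using compact_translation[OF K, of t] by simp
      have sets: "sets \<nu> = sets borel" using \<mu>(2) unfolding is_fourier_transform_def by blast
      have Ss: "S \<in> sets \<nu>" unfolding sets using Sc by (simp add: borel_closed compact_imp_closed)
      have Sfin: "emeasure \<nu> S < \<infinity>" using \<mu>(2) Sc unfolding is_fourier_transform_def by blast
      have FT: "integrable \<nu> (\<lambda>y. (cmod (icheck (ft d t) y))\<^sup>2)"
        "\<mu> (conv (ft d t) (tilde (ft d t))) = complex_of_real (LINT y|\<nu>. (cmod (icheck (ft d t) y))\<^sup>2)"
        using \<mu>(2) ft_Cc[of d t] unfolding is_fourier_transform_def by blast+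
      have low: "c\<^sup>2 \<le> (cmod (icheck (ft d t) y))\<^sup>2" if "y \<in> S" for y
      proof -
        have "y - t \<in> K" using that unfolding S_def by auto
        then have "norm (y - t) \<le> R" by (rule R(2))
        then have "c \<le> Re (icheck (ft d 0) (y - t))"
          unfolding c_def I_def by (rule Re_icheck[OF d _ dR])
        also have "\<dots> \<le> cmod (icheck (ft d t) y)"
          unfolding icheck_ft[of d t y] by (rule complex_Re_le_cmod)
        finally show ?thesis using c by (intro power_mono) auto
      qed
      have "measure \<nu> S * c\<^sup>2 = (LINT y|\<nu>. indicator S y * c\<^sup>2)"
        using Ss Sfin by simp
      also have "\<dots> \<le> (LINT y|\<nu>. (cmod (icheck (ft d t) y))\<^sup>2)"
      proof (rule Bochner_Integration.integral_mono)
        show "integrable \<nu> (\<lambda>y. indicator S y * c\<^sup>2)"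
          using Ss Sfin by (intro integrable_mult_left integrable_real_indicator)
        show "integrable \<nu> (\<lambda>y. (cmod (icheck (ft d t) y))\<^sup>2)" by (rule FT(1))
        show "indicator S y * c\<^sup>2 \<le> (cmod (icheck (ft d t) y))\<^sup>2" for y
          using low[of y] by (cases "y \<in> S") auto
      qed
      also have "\<dots> = Re (\<mu> (gt d t))" unfolding gt_def FT(2) by simp
      also have "\<dots> \<le> B" by (rule B[OF \<mu>(1)])
      finally have "measure \<nu> S * c\<^sup>2 \<le> B" .
      then have "measure \<nu> S \<le> B / c\<^sup>2" using c by (simp add: field_simps)
      then have "emeasure \<nu> S \<le> ennreal (B / c\<^sup>2)"
        using Sfin by (simp add: emeasure_eq_ennreal_measure ennreal_leI)
      then show "emeasure \<nu> ((\<lambda>x. t + x) ` K) \<le> ennreal (B / c\<^sup>2)" unfolding S_def .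
    qed
  qed
qed

end
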